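(* Fix $C<1$ and let $C_u=C+\alpha_n$. There is an integer $N\ge1$ such that $C_u<1$ for all $n\ge N$, and for all $n\ge N$, all $1\le i\le n$ and all $1\le t\le n$, \[ \mathbb{E}(\#\mathcal{N}_t(i))\le C_u^t\qquad\text{and}\qquad\mathbb{E}\big((\#\mathcal{N}_t(i))^2\big)\le\frac{C_u^t}{1-C_u}. \]
   Context: Let $C>0$ be a constant and $(\alpha_n)_{n\ge1}$ a sequence of nonnegative reals with $\alpha_n\to0$. For each $n$, consider the complete graph $K_n$ on vertex set $\{1,\dots,n\}$; each edge $e$ of $K_n$ is independently open with probability $p_n(e)$ and closed otherwise, where $\frac{C-\alpha_n}{n}\le p_n(e)\le\frac{C+\alpha_n}{n}$ for every edge $e$. Let $G$ be the resulting random graph of open edges, with probability measure $\mathbb{P}$ and expectation $\mathbb{E}$. For a vertex $i$ and integer $t\ge1$, $\mathcal{N}_t(i)$ is the set of vertices at graph distance exactly $t$ from $i$ in $G$ (distance = least number of open edges in a path joining them), and $\#\mathcal{N}_t(i)$ its cardinality. *)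

theory Defs
  imports "HOL-Probability.Probability"
begin

definition Kn_edges :: "nat \<Rightarrow> nat set set" where
  "Kn_edges n = {{i, j} | i j. i \<in> {1..n} \<and> j \<in> {1..n} \<and> i \<noteq> j}"

definition random_graph :: "nat \<Rightarrow> (nat set \<Rightarrow> real) \<Rightarrow> nat set set pmf" where
  "random_graph n p =
     map_pmf (\<lambda>f. {e \<in> Kn_edges n. f e})
             (Pi_pmf (Kn_edges n) False (\<lambda>e. bernoulli_pmf (p e)))"

definition walk_len :: "nat set set \<Rightarrow> nat \<Rightarrow> nat \<Rightarrow> nat \<Rightarrow> bool" where
  "walk_len G k i j \<longleftrightarrow>
     (\<exists>f :: nat \<Rightarrow> nat. f 0 = i \<and> f k = j \<and> (\<forall>m<k. {f m, f (Suc m)} \<in> G))"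

definition nbhd :: "nat set set \<Rightarrow> nat \<Rightarrow> nat \<Rightarrow> nat \<Rightarrow> nat set" where
  "nbhd G n t i = {j \<in> {1..n}. walk_len G t i j \<and> (\<forall>s<t. \<not> walk_len G s i j)}"

end

theory Submission
  imports Defs
begin

lemma finite_Kn: "finite (Kn_edges n)"
proof -
  have "Kn_edges n \<subseteq> Pow {1..n}" unfolding Kn_edges_def by auto
  thus ?thesis by (rule finite_subset) auto
qed

lemma set_rg: "set_pmf (random_graph n p) \<subseteq> Pow (Kn_edges n)"
  unfolding random_graph_def by auto

lemma finite_set_rg: "finite (set_pmf (random_graph n p))"
  using set_rg finite_Kn by (metis finite_Pow_iff finite_subset)

lemma prob_edges:
  assumes S: "S \<subseteq> Kn_edges n" and pp: "\<And>e. e \<in> Kn_edges n \<Longrightarrow> 0 \<le> p e \<and> p e \<le> 1"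
  shows "measure_pmf.expectation (random_graph n p) (\<lambda>G. if S \<subseteq> G then 1 else 0 :: real) = (\<Prod>e\<in>S. p e)"
proof -
  let ?K = "Kn_edges n"
  let ?g = "\<lambda>e (b::bool). if e \<in> S then (if b then 1 else 0) else (1::real)"
  have eq: "(if S \<subseteq> {e \<in> ?K. f e} then 1 else 0) = (\<Prod>e\<in>?K. ?g e (f e))" for f
  proof (cases "\<forall>e\<in>S. f e")
    case True
    then show ?thesis using S by (auto intro!: prod.neutral)
  next
    case False
    then obtain e where "e \<in> S" "\<not> f e" by auto
    then show ?thesis using S finite_Kn by (auto intro!: prod_zero[symmetric] bexI[of _ e])
  qed
  have "measure_pmf.expectation (random_graph n p) (\<lambda>G. if S \<subseteq> G then 1 else 0 :: real)
      = measure_pmf.expectation (Pi_pmf ?K False (\<lambda>e. bernoulli_pmf (p e))) (\<lambda>f. \<Prod>e\<in>?K. ?g e (f e))"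
    unfolding random_graph_def integral_map_pmf eq ..
  also have "\<dots> = (\<Prod>e\<in>?K. measure_pmf.expectation (bernoulli_pmf (p e)) (?g e))"
    by (rule expectation_prod_Pi_pmf) (auto simp: finite_Kn integrable_measure_pmf_finite)
  also have "\<dots> = (\<Prod>e\<in>?K. if e \<in> S then p e else 1)"
    using pp by (intro prod.cong) auto
  also have "\<dots> = (\<Prod>e\<in>S. p e)"
    using S finite_Kn by (simp add: prod.If_cases Int_absorb1 Int_absorb2)
  finally show ?thesis .
qed

definition wedges :: "(nat \<Rightarrow> nat) \<Rightarrow> nat \<Rightarrow> nat list \<Rightarrow> nat set set" where
  "wedges par L xs = (\<lambda>m. {xs!m, xs!(par m)}) ` {1..L}"

definition Univ :: "nat \<Rightarrow> nat \<Rightarrow> nat \<Rightarrow> nat list set" where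
  "Univ n i L = {xs. length xs = Suc L \<and> distinct xs \<and> set xs \<subseteq> {1..n} \<and> xs!0 = i}"

definition Wit :: "nat set set \<Rightarrow> nat \<Rightarrow> nat \<Rightarrow> nat \<Rightarrow> (nat \<Rightarrow> nat) \<Rightarrow> nat list set" where
  "Wit G n i L par = {xs \<in> Univ n i L. wedges par L xs \<subseteq> G}"

lemma Univ_sub: "Univ n i L \<subseteq> (\<lambda>ys. i # ys) ` {ys. set ys \<subseteq> {1..n} \<and> length ys = L}"
proof
  fix xs assume "xs \<in> Univ n i L"
  then have "length xs = Suc L" "set xs \<subseteq> {1..n}" "xs!0 = i" unfolding Univ_def by auto
  then show "xs \<in> (\<lambda>ys. i # ys) ` {ys. set ys \<subseteq> {1..n} \<and> length ys = L}"
    by (cases xs) auto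
qed

lemma finite_Univ: "finite (Univ n i L)"
  by (rule finite_subset[OF Univ_sub]) (auto intro: finite_lists_length_eq)

lemma card_Univ: "card (Univ n i L) \<le> n ^ L"
proof -
  have "card (Univ n i L) \<le> card ((\<lambda>ys. i # ys) ` {ys. set ys \<subseteq> {1..n} \<and> length ys = L})"
    by (rule card_mono[OF _ Univ_sub]) (auto intro: finite_lists_length_eq)
  also have "\<dots> \<le> card {ys. set ys \<subseteq> {1..n} \<and> length ys = L}" by (rule card_image_le) (auto intro: finite_lists_length_eq)
  also have "\<dots> = n ^ L" by (simp add: card_lists_length_eq)
  finally show ?thesis .
qed

lemma wedges_props:
  assumes xs: "xs \<in> Univ n i L" and par: "\<And>m. m \<in> {1..L} \<Longrightarrow> par m < m"
  shows "wedges par L xs \<subseteq> Kn_edges n" "card (wedges par L xs) = L"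
proof -
  have len: "length xs = Suc L" and d: "distinct xs" and s: "set xs \<subseteq> {1..n}"
    using xs unfolding Univ_def by auto
  show "wedges par L xs \<subseteq> Kn_edges n"
  proof
    fix e assume "e \<in> wedges par L xs"
    then obtain m where m: "m \<in> {1..L}" "e = {xs!m, xs!(par m)}" unfolding wedges_def by auto
    have "par m < m" using par m(1) by auto
    hence lt: "m < length xs" "par m < length xs" using m len by auto
    have ne: "xs!m \<noteq> xs!(par m)" using d lt \<open>par m < m\<close> by (simp add: nth_eq_iff_index_eq)
    have "xs!m \<in> {1..n}" "xs!(par m) \<in> {1..n}" using s lt by (auto dest: nth_mem)
    then show "e \<in> Kn_edges n" using ne m unfolding Kn_edges_def by blast
  qed
  have "inj_on (\<lambda>m. {xs!m, xs!(par m)}) {1..L}"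
  proof
    fix a b assume a: "a \<in> {1..L}" and b: "b \<in> {1..L}" and eq: "{xs!a, xs!(par a)} = {xs!b, xs!(par b)}"
    have pa: "par a < a" and pb: "par b < b" using par a b by auto
    have la: "a < length xs" "par a < length xs" and lb: "b < length xs" "par b < length xs"
      using a b pa pb len by auto
    from eq have "xs!a = xs!b \<or> (xs!a = xs!(par b) \<and> xs!(par a) = xs!b)" by (auto simp: doubleton_eq_iff)
    then show "a = b"
    proof
      assume "xs!a = xs!b" then show ?thesis using d la lb by (simp add: nth_eq_iff_index_eq)
    next
      assume h: "xs!a = xs!(par b) \<and> xs!(par a) = xs!b"
      have "a = par b" using h d la lb by (simp add: nth_eq_iff_index_eq)
      moreover have "par a = b" using h d la(2) lb(1) nth_eq_iff_index_eq by metis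
      ultimately show ?thesis using pa pb by simp
    qed
  qed
  then show "card (wedges par L xs) = L" unfolding wedges_def by (simp add: card_image)
qed

lemma exp_Wit:
  assumes pp: "\<And>e. e \<in> Kn_edges n \<Longrightarrow> 0 \<le> p e \<and> p e \<le> 1"
    and pq: "\<And>e. e \<in> Kn_edges n \<Longrightarrow> p e \<le> q" and q0: "0 \<le> q"
    and par: "\<And>m. m \<in> {1..L} \<Longrightarrow> par m < m"
  shows "measure_pmf.expectation (random_graph n p) (\<lambda>G. real (card (Wit G n i L par))) \<le> real n ^ L * q ^ L"
proof -
  let ?U = "Univ n i L"
  have c: "real (card (Wit G n i L par)) = (\<Sum>xs\<in>?U. if wedges par L xs \<subseteq> G then 1 else 0)" for G
  proof -
    have "card (Wit G n i L par) = (\<Sum>xs\<in>{xs \<in> ?U. wedges par L xs \<subseteq> G}. 1)" unfolding Wit_def by simp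
    also have "\<dots> = (\<Sum>xs\<in>?U. if wedges par L xs \<subseteq> G then 1 else 0)"
      by (rule sum.inter_filter[OF finite_Univ])
    finally show ?thesis by (simp add: of_nat_sum if_distrib cong: if_cong)
  qed
  have "measure_pmf.expectation (random_graph n p) (\<lambda>G. real (card (Wit G n i L par)))
     = (\<Sum>xs\<in>?U. measure_pmf.expectation (random_graph n p) (\<lambda>G. if wedges par L xs \<subseteq> G then 1 else 0 :: real))"
    unfolding c by (rule Bochner_Integration.integral_sum) (auto intro: integrable_measure_pmf_finite finite_set_rg)
  also have "\<dots> = (\<Sum>xs\<in>?U. \<Prod>e\<in>wedges par L xs. p e)"
    using wedges_props(1)[OF _ par] by (intro sum.cong refl prob_edges pp) auto
  also have "\<dots> \<le> (\<Sum>xs\<in>?U. q ^ L)"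
  proof (rule sum_mono)
    fix xs assume xs: "xs \<in> ?U"
    have "(\<Prod>e\<in>wedges par L xs. p e) \<le> (\<Prod>e\<in>wedges par L xs. q)"
      using wedges_props(1)[OF xs par] pp pq by (intro prod_mono) auto
    also have "\<dots> = q ^ L" using wedges_props(2)[OF xs par] by simp
    finally show "(\<Prod>e\<in>wedges par L xs. p e) \<le> q ^ L" .
  qed
  also have "\<dots> = real (card ?U) * q ^ L" by simp
  also have "\<dots> \<le> real n ^ L * q ^ L"
    using card_Univ[of n i L] q0 by (intro mult_right_mono) (auto simp flip: of_nat_power)
  finally show ?thesis .
qed

definition Dst :: "nat set set \<Rightarrow> nat \<Rightarrow> nat \<Rightarrow> nat \<Rightarrow> bool" where
  "Dst G i m v \<longleftrightarrow> walk_len G m i v \<and> (\<forall>s<m. \<not> walk_len G s i v)"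

lemma walk_concat:
  assumes "walk_len G a x y" "walk_len G b y z" shows "walk_len G (a+b) x z"
proof -
  obtain f where f: "f 0 = x" "f a = y" "\<forall>m<a. {f m, f (Suc m)} \<in> G" using assms(1) unfolding walk_len_def by blast
  obtain g where g: "g 0 = y" "g b = z" "\<forall>m<b. {g m, g (Suc m)} \<in> G" using assms(2) unfolding walk_len_def by blast
  define h where "h k = (if k \<le> a then f k else g (k - a))" for k
  have "h 0 = x" "h (a+b) = z" using f g by (auto simp: h_def)
  moreover have "\<forall>m<a+b. {h m, h (Suc m)} \<in> G"
  proof (intro allI impI)
    fix m assume m: "m < a + b"
    show "{h m, h (Suc m)} \<in> G"
    proof (cases "m < a")
      case True then show ?thesis using f by (auto simp: h_def)
    next
      case False
      then have "h m = g (m - a)" using f g by (auto simp: h_def)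
      moreover have "h (Suc m) = g (Suc (m - a))" using False by (auto simp: h_def Suc_diff_le)
      ultimately show ?thesis using g m False by auto
    qed
  qed
  ultimately show ?thesis unfolding walk_len_def by blast
qed

lemma walk_prefix:
  assumes "f 0 = i" "\<forall>m<t. {f m, f (Suc m)} \<in> G" "m \<le> t" shows "walk_len G m i (f m)"
  using assms unfolding walk_len_def by (intro exI[of _ f]) auto

lemma walk_suffix:
  assumes "\<forall>m<t. {f m, f (Suc m)} \<in> G" "m \<le> t" shows "walk_len G (t - m) (f m) (f t)"
  using assms unfolding walk_len_def by (intro exI[of _ "\<lambda>k. f (m + k)"]) auto

lemma Dst_unique: "Dst G i a v \<Longrightarrow> Dst G i b v \<Longrightarrow> a = b"
  unfolding Dst_def by (metis linorder_neqE_nat)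

lemma geo:
  assumes f0: "f 0 = i" and fe: "\<forall>m<t. {f m, f (Suc m)} \<in> G" and sh: "\<forall>s<t. \<not> walk_len G s i (f t)"
    and m: "m \<le> t"
  shows "Dst G i m (f m)"
  unfolding Dst_def
proof (intro conjI allI impI)
  show "walk_len G m i (f m)" by (rule walk_prefix[OF f0 fe m])
  fix s assume s: "s < m"
  show "\<not> walk_len G s i (f m)"
  proof
    assume "walk_len G s i (f m)"
    from walk_concat[OF this walk_suffix[OF fe m]] have "walk_len G (s + (t - m)) i (f t)" .
    moreover have "s + (t - m) < t" using s m by simp
    ultimately show False using sh by blast
  qed
qed

lemma Kn_mem: "e \<in> Kn_edges n \<Longrightarrow> x \<in> e \<Longrightarrow> x \<in> {1..n}"
  unfolding Kn_edges_def by auto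

lemma walk_in_range:
  assumes G: "G \<subseteq> Kn_edges n" and fe: "\<forall>m<t. {f m, f (Suc m)} \<in> G" and t: "1 \<le> t" and m: "m \<le> t"
  shows "f m \<in> {1..n}"
proof (cases "m < t")
  case True then show ?thesis using fe G Kn_mem[of "{f m, f (Suc m)}" n "f m"] by auto
next
  case False
  then have "m = Suc (m - 1)" "m - 1 < t" using t m by auto
  then show ?thesis using fe G Kn_mem[of "{f (m-1), f (Suc (m-1))}" n "f m"] by (metis in_mono insertI1 insert_commute)
qed

definition pth :: "nat set set \<Rightarrow> nat \<Rightarrow> nat \<Rightarrow> nat \<Rightarrow> nat \<Rightarrow> nat" where
  "pth G i t j = (SOME f. f 0 = i \<and> f t = j \<and> (\<forall>m<t. {f m, f (Suc m)} \<in> G))"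

lemma pth:
  assumes "j \<in> nbhd G n t i"
  shows "pth G i t j 0 = i" "pth G i t j t = j" "\<forall>m<t. {pth G i t j m, pth G i t j (Suc m)} \<in> G"
    "\<forall>s<t. \<not> walk_len G s i j" "j \<in> {1..n}"
proof -
  have "\<exists>f. f 0 = i \<and> f t = j \<and> (\<forall>m<t. {f m, f (Suc m)} \<in> G)" using assms unfolding nbhd_def walk_len_def by blast
  from someI_ex[OF this] show "pth G i t j 0 = i" "pth G i t j t = j" "\<forall>m<t. {pth G i t j m, pth G i t j (Suc m)} \<in> G"
    unfolding pth_def by auto
  show "\<forall>s<t. \<not> walk_len G s i j" "j \<in> {1..n}" using assms unfolding nbhd_def by auto
qed

lemma pth_Dst:
  assumes "j \<in> nbhd G n t i" "m \<le> t" shows "Dst G i m (pth G i t j m)"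
  using geo[OF pth(1)[OF assms(1)] pth(3)[OF assms(1)]] pth(2,4)[OF assms(1)] assms(2) by metis

lemma pth_inj:
  assumes "j \<in> nbhd G n t i" shows "inj_on (pth G i t j) {0..t}"
  using pth_Dst[OF assms] Dst_unique unfolding inj_on_def by (metis atLeastAtMost_iff)

lemma pth_range:
  assumes "j \<in> nbhd G n t i" "G \<subseteq> Kn_edges n" "1 \<le> t" "m \<le> t" shows "pth G i t j m \<in> {1..n}"
  using walk_in_range[OF assms(2) pth(3)[OF assms(1)] assms(3,4)] .

lemma finite_Wit: "finite (Wit G n i L par)"
  unfolding Wit_def by (rule finite_subset[OF _ finite_Univ[of n i L]]) auto

lemma card_nbhd_le:
  assumes G: "G \<subseteq> Kn_edges n" and t: "1 \<le> t"
  shows "card (nbhd G n t i) \<le> card (Wit G n i t (\<lambda>m. m - 1))"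
proof (rule card_inj_on_le[OF _ _ finite_Wit])
  let ?F = "\<lambda>j. map (pth G i t j) [0..<Suc t]"
  show "inj_on ?F (nbhd G n t i)"
  proof
    fix j k assume j: "j \<in> nbhd G n t i" and k: "k \<in> nbhd G n t i" and e: "?F j = ?F k"
    have "?F j ! t = ?F k ! t" using e by (rule arg_cong)
    then show "j = k" using pth(2)[OF j] pth(2)[OF k] by (simp del: upt_Suc add: nth_map_upt)
  qed
  show "?F ` nbhd G n t i \<subseteq> Wit G n i t (\<lambda>m. m - 1)"
  proof
    fix xs assume "xs \<in> ?F ` nbhd G n t i"
    then obtain j where j: "j \<in> nbhd G n t i" and xs: "xs = ?F j" by auto
    let ?f = "pth G i t j"
    have "xs \<in> Univ n i t"
      unfolding Univ_def xs using pth_inj[OF j] pth_range[OF j G t] pth(1)[OF j]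
      by (auto simp: distinct_map atLeastLessThanSuc_atLeastAtMost simp del: upt_Suc)
    moreover have "wedges (\<lambda>m. m - 1) t xs \<subseteq> G"
    proof
      fix e assume "e \<in> wedges (\<lambda>m. m - 1) t xs"
      then obtain m where m: "m \<in> {1..t}" "e = {xs!m, xs!(m-1)}" unfolding wedges_def by auto
      have "e = {?f (m-1), ?f (Suc (m-1))}" using m unfolding xs
        by (auto simp del: upt_Suc simp: nth_map_upt)
      moreover have "m - 1 < t" using m by auto
      ultimately show "e \<in> G" using pth(3)[OF j] by auto
    qed
    ultimately show "xs \<in> Wit G n i t (\<lambda>m. m - 1)" unfolding Wit_def by auto
  qed
qed

definition rr :: "nat set set \<Rightarrow> nat \<Rightarrow> nat \<Rightarrow> nat \<Rightarrow> nat \<Rightarrow> nat" where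
  "rr G i t j k = Max {m \<in> {0..t}. pth G i t k m \<in> pth G i t j ` {0..t}}"

definition xx :: "nat set set \<Rightarrow> nat \<Rightarrow> nat \<Rightarrow> nat \<Rightarrow> nat \<Rightarrow> nat list" where
  "xx G i t j k = map (pth G i t j) [0..<Suc t] @ map (pth G i t k) [Suc (rr G i t j k)..<Suc t]"

definition parr :: "nat \<Rightarrow> nat \<Rightarrow> nat \<Rightarrow> nat" where
  "parr t r m = (if m = Suc t then r else m - 1)"

lemma rr_props:
  assumes j: "j \<in> nbhd G n t i" and k: "k \<in> nbhd G n t i"
  shows "rr G i t j k \<le> t" "pth G i t k (rr G i t j k) = pth G i t j (rr G i t j k)"
    "\<And>m. rr G i t j k < m \<Longrightarrow> m \<le> t \<Longrightarrow> pth G i t k m \<notin> pth G i t j ` {0..t}"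
proof -
  let ?f = "pth G i t j" and ?g = "pth G i t k"
  let ?S = "{m \<in> {0..t}. ?g m \<in> ?f ` {0..t}}"
  have fin: "finite ?S" by auto
  have "0 \<in> ?S" using pth(1)[OF j] pth(1)[OF k] by force
  then have ne: "?S \<noteq> {}" by auto
  have inS: "rr G i t j k \<in> ?S" unfolding rr_def using Max_in[OF fin ne] .
  then show "rr G i t j k \<le> t" by auto
  from inS obtain r' where r': "r' \<le> t" "?g (rr G i t j k) = ?f r'" by auto
  have "Dst G i (rr G i t j k) (?g (rr G i t j k))" using pth_Dst[OF k] inS by auto
  moreover have "Dst G i r' (?f r')" using pth_Dst[OF j r'(1)] .
  ultimately have "rr G i t j k = r'" using r'(2) Dst_unique by metis
  then show "?g (rr G i t j k) = ?f (rr G i t j k)" using r' by simp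
  fix m assume m: "rr G i t j k < m" "m \<le> t"
  show "?g m \<notin> ?f ` {0..t}"
  proof
    assume "?g m \<in> ?f ` {0..t}"
    then have "m \<in> ?S" using m by auto
    then have "m \<le> rr G i t j k" unfolding rr_def by (rule Max_ge[OF fin])
    with m show False by simp
  qed
qed

lemma xx_nth_lo: "m \<le> t \<Longrightarrow> xx G i t j k ! m = pth G i t j m"
  unfolding xx_def by (simp add: nth_append nth_map_upt del: upt_Suc)

lemma xx_nth_hi: "Suc t \<le> m \<Longrightarrow> m < Suc t + (t - rr G i t j k) \<Longrightarrow>
    xx G i t j k ! m = pth G i t k (Suc (rr G i t j k) + (m - Suc t))"
  unfolding xx_def by (simp add: nth_append nth_map_upt del: upt_Suc)

lemma xx_len: "length (xx G i t j k) = Suc t + (t - rr G i t j k)"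
  unfolding xx_def by (simp; arith)

lemma xx_last:
  assumes j: "j \<in> nbhd G n t i" and k: "k \<in> nbhd G n t i"
  shows "last (xx G i t j k) = k"
proof -
  let ?r = "rr G i t j k"
  have r: "?r \<le> t" using rr_props[OF j k] by simp
  have ne: "xx G i t j k \<noteq> []" using xx_len[of G i t j k] by auto
  have "last (xx G i t j k) = xx G i t j k ! (t + (t - ?r))"
    using last_conv_nth[OF ne] xx_len[of G i t j k] by simp
  also have "\<dots> = k"
  proof (cases "?r < t")
    case True
    then have "xx G i t j k ! (t + (t - ?r)) = pth G i t k (Suc ?r + (t + (t - ?r) - Suc t))"
      by (intro xx_nth_hi) auto
    also have "Suc ?r + (t + (t - ?r) - Suc t) = t" using True by simp
    finally show ?thesis using pth(2)[OF k] by simp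
  next
    case False
    then have rt: "?r = t" using r by simp
    have "xx G i t j k ! (t + (t - ?r)) = pth G i t j t" using rt by (simp add: xx_nth_lo del: xx_def)
    also have "\<dots> = pth G i t k t" using rr_props(2)[OF j k] rt by simp
    finally show ?thesis using pth(2)[OF k] by simp
  qed
  finally show ?thesis .
qed

lemma xx_in:
  assumes j: "j \<in> nbhd G n t i" and k: "k \<in> nbhd G n t i" and G: "G \<subseteq> Kn_edges n" and t: "1 \<le> t"
  shows "xx G i t j k \<in> Wit G n i (t + (t - rr G i t j k)) (parr t (rr G i t j k))"
proof -
  let ?f = "pth G i t j" and ?g = "pth G i t k" and ?r = "rr G i t j k"
  have r: "?r \<le> t" and gr: "?g ?r = ?f ?r" and mx: "\<And>m. ?r < m \<Longrightarrow> m \<le> t \<Longrightarrow> ?g m \<notin> ?f ` {0..t}"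
    using rr_props[OF j k] by auto
  have "set [0..<Suc t] = {0..t}" by auto
  have d1: "distinct (map ?f [0..<Suc t])" using pth_inj[OF j]
    by (simp add: distinct_map atLeastLessThanSuc_atLeastAtMost del: upt_Suc)
  have "inj_on ?g {Suc ?r..<Suc t}" using pth_inj[OF k] by (rule inj_on_subset) auto
  then have d2: "distinct (map ?g [Suc ?r..<Suc t])" by (simp add: distinct_map del: upt_Suc)
  have d3: "set (map ?f [0..<Suc t]) \<inter> set (map ?g [Suc ?r..<Suc t]) = {}"
  proof -
    { fix x assume x1: "x \<in> set (map ?f [0..<Suc t])" and x2: "x \<in> set (map ?g [Suc ?r..<Suc t])"
      from x1 have xf: "x \<in> ?f ` {0..t}" by (auto simp del: upt_Suc)
      from x2 obtain b where b: "b \<in> {Suc ?r..<Suc t}" "x = ?g b" by (auto simp del: upt_Suc)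
      with mx[of b] xf have False by auto }
    then show ?thesis by blast
  qed
  have dist: "distinct (xx G i t j k)" unfolding xx_def using d1 d2 d3 by (simp del: upt_Suc)
  have rng: "set (xx G i t j k) \<subseteq> {1..n}" unfolding xx_def
    using pth_range[OF j G t] pth_range[OF k G t] by (auto simp del: upt_Suc)
  have x0: "xx G i t j k ! 0 = i" using xx_nth_lo[of 0 t G i j k] pth(1)[OF j] by simp
  have U: "xx G i t j k \<in> Univ n i (t + (t - ?r))"
    unfolding Univ_def using dist rng x0 xx_len[of G i t j k] by simp
  have W: "wedges (parr t ?r) (t + (t - ?r)) (xx G i t j k) \<subseteq> G"
  proof
    fix e assume "e \<in> wedges (parr t ?r) (t + (t - ?r)) (xx G i t j k)"
    then obtain m where m: "1 \<le> m" "m \<le> t + (t - ?r)" "e = {xx G i t j k ! m, xx G i t j k ! (parr t ?r m)}"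
      unfolding wedges_def by auto
    consider "m \<le> t" | "m = Suc t" | "Suc t < m" by linarith
    then show "e \<in> G"
    proof cases
      case 1
      then have "e = {?f (Suc (m - 1)), ?f (m - 1)}" using m
        by (simp add: parr_def xx_nth_lo del: xx_def)
      moreover have "m - 1 < t" using 1 m by simp
      ultimately show ?thesis using pth(3)[OF j] by (auto simp: insert_commute)
    next
      case 2
      then have rt: "?r < t" using m by simp
      have "xx G i t j k ! m = ?g (Suc ?r)" using 2 rt xx_nth_hi[of t m G i j k] by simp
      moreover have "xx G i t j k ! (parr t ?r m) = ?g ?r" using 2 r gr
        by (simp add: parr_def xx_nth_lo del: xx_def)
      ultimately have "e = {?g ?r, ?g (Suc ?r)}" using m by (auto simp: insert_commute)
      then show ?thesis using pth(3)[OF k] rt by auto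
    next
      case 3
      define a where "a = ?r + (m - Suc t)"
      have a: "a < t" using 3 m r unfolding a_def by simp
      have "xx G i t j k ! m = ?g (Suc a)" using 3 m xx_nth_hi[of t m G i j k] unfolding a_def by simp
      moreover have "xx G i t j k ! (parr t ?r m) = ?g a"
      proof -
        have "parr t ?r m = m - 1" using 3 by (simp add: parr_def)
        moreover have "xx G i t j k ! (m - 1) = ?g (Suc ?r + (m - 1 - Suc t))"
          using 3 m by (intro xx_nth_hi) auto
        moreover have "Suc ?r + (m - 1 - Suc t) = a" using 3 unfolding a_def by simp
        ultimately show ?thesis by simp
      qed
      ultimately have "e = {?g a, ?g (Suc a)}" using m by (auto simp: insert_commute)
      then show ?thesis using pth(3)[OF k] a by auto
    qed
  qed
  show ?thesis unfolding Wit_def using U W by simp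
qed

lemma card_sq_le:
  assumes G: "G \<subseteq> Kn_edges n" and t: "1 \<le> t"
  shows "(card (nbhd G n t i))^2 \<le> (\<Sum>r\<in>{0..t}. card (Wit G n i (t + (t - r)) (parr t r)))"
proof -
  let ?N = "nbhd G n t i"
  let ?S = "Sigma {0..t} (\<lambda>r. Wit G n i (t + (t - r)) (parr t r))"
  let ?F = "\<lambda>(j,k). (rr G i t j k, xx G i t j k)"
  have "(card ?N)^2 = card (?N \<times> ?N)" by (simp add: card_cartesian_product power2_eq_square)
  also have "\<dots> \<le> card ?S"
  proof (rule card_inj_on_le)
    show "inj_on ?F (?N \<times> ?N)"
    proof (rule inj_onI, clarify)
      fix j k j' k' assume j: "j \<in> ?N" and k: "k \<in> ?N" and j': "j' \<in> ?N" and k': "k' \<in> ?N"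
        and e: "rr G i t j k = rr G i t j' k'" "xx G i t j k = xx G i t j' k'"
      have "xx G i t j k ! t = xx G i t j' k' ! t" using e(2) by simp
      then have "j = j'" using pth(2)[OF j] pth(2)[OF j'] by (simp add: xx_nth_lo del: xx_def)
      moreover have "last (xx G i t j k) = last (xx G i t j' k')" using e(2) by simp
      then have "k = k'" using xx_last[OF j k] xx_last[OF j' k'] by simp
      ultimately show "j = j' \<and> k = k'" by simp
    qed
    show "?F ` (?N \<times> ?N) \<subseteq> ?S"
      using xx_in[OF _ _ G t] rr_props(1) by auto
    show "finite ?S" by (auto intro: finite_Wit)
  qed
  also have "\<dots> = (\<Sum>r\<in>{0..t}. card (Wit G n i (t + (t - r)) (parr t r)))"
    by (rule card_SigmaI) (auto intro: finite_Wit)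
  finally show ?thesis .
qed

lemma parr_lt: "r \<le> t \<Longrightarrow> m \<in> {1..t + (t - r)} \<Longrightarrow> parr t r m < m"
  unfolding parr_def by auto

lemma geom_bound:
  fixes c :: real assumes c: "0 \<le> c" "c < 1"
  shows "(\<Sum>r\<in>{0..t}. c ^ (t + (t - r))) \<le> c ^ t / (1 - c)"
proof -
  have "(\<Sum>r\<in>{0..t}. c ^ (t + (t - r))) = c ^ t * (\<Sum>r\<in>{0..t}. c ^ (t - r))"
    unfolding power_add sum_distrib_left ..
  also have "(\<Sum>r\<in>{0..t}. c ^ (t - r)) = (\<Sum>r\<in>{0..t}. c ^ r)"
    by (subst sum.atLeastAtMost_rev) simp
  also have "\<dots> = (\<Sum>r<Suc t. c ^ r)" by (simp add: atLeast0AtMost lessThan_Suc_atMost)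
  also have "\<dots> = (1 - c ^ Suc t) / (1 - c)"
  proof -
    have "c \<noteq> 1" using c by simp
    from geometric_sum[OF this, of "Suc t"] show ?thesis
      using c by (simp add: field_simps)
  qed
  also have "\<dots> \<le> 1 / (1 - c)" using c by (intro divide_right_mono) auto
  finally show ?thesis using c by (simp add: mult_left_mono)
qed

theorem lemma6:
  fixes C :: real and \<alpha> :: "nat \<Rightarrow> real" and p :: "nat \<Rightarrow> nat set \<Rightarrow> real"
  assumes C_pos: "C > 0" and C_lt1: "C < 1"
    and \<alpha>_nonneg: "\<And>n. \<alpha> n \<ge> 0"
    and \<alpha>_lim: "\<alpha> \<longlonglongrightarrow> 0"
    and p_prob: "\<And>n e. e \<in> Kn_edges n \<Longrightarrow> 0 \<le> p n e \<and> p n e \<le> 1"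
    and p_bounds: "\<And>n e. e \<in> Kn_edges n \<Longrightarrow>
                     (C - \<alpha> n) / real n \<le> p n e \<and> p n e \<le> (C + \<alpha> n) / real n"
  shows "\<exists>N::nat. N \<ge> 1 \<and> (\<forall>n\<ge>N. C + \<alpha> n < 1) \<and>
           (\<forall>n\<ge>N. \<forall>i\<in>{1..n}. \<forall>t\<in>{1..n}.
              measure_pmf.expectation (random_graph n (p n))
                  (\<lambda>G. real (card (nbhd G n t i))) \<le> (C + \<alpha> n) ^ t \<and>
              measure_pmf.expectation (random_graph n (p n))
                  (\<lambda>G. (real (card (nbhd G n t i)))\<^sup>2)
                \<le> (C + \<alpha> n) ^ t / (1 - (C + \<alpha> n)))"
proof -
  have "\<forall>\<^sub>F n in sequentially. \<alpha> n < 1 - C"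
    using order_tendstoD(2)[OF \<alpha>_lim] C_lt1 by simp
  then obtain N0 where N0: "\<And>n. n \<ge> N0 \<Longrightarrow> \<alpha> n < 1 - C" unfolding eventually_sequentially by blast
  define N where "N = max 1 N0"
  have cu: "C + \<alpha> n < 1" if "n \<ge> N" for n using N0[of n] that unfolding N_def by simp
  have main: "measure_pmf.expectation (random_graph n (p n))
                  (\<lambda>G. real (card (nbhd G n t i))) \<le> (C + \<alpha> n) ^ t \<and>
              measure_pmf.expectation (random_graph n (p n))
                  (\<lambda>G. (real (card (nbhd G n t i)))\<^sup>2)
                \<le> (C + \<alpha> n) ^ t / (1 - (C + \<alpha> n))"
    if n: "n \<ge> N" and i: "i \<in> {1..n}" and t: "t \<in> {1..n}" for n i t
  proof -
    define c where "c = C + \<alpha> n"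
    define q where "q = c / real n"
    have n1: "n \<ge> 1" using n unfolding N_def by simp
    have c0: "0 \<le> c" and c1: "c < 1" using C_pos \<alpha>_nonneg[of n] cu[OF n] unfolding c_def by auto
    have q0: "0 \<le> q" using c0 unfolding q_def by simp
    have nq: "real n * q = c" using n1 unfolding q_def by simp
    have pp: "\<And>e. e \<in> Kn_edges n \<Longrightarrow> 0 \<le> p n e \<and> p n e \<le> 1" by (rule p_prob)
    have pq: "\<And>e. e \<in> Kn_edges n \<Longrightarrow> p n e \<le> q" using p_bounds unfolding q_def c_def by blast
    have t1: "1 \<le> t" using t by simp
    let ?M = "random_graph n (p n)"
    have int: "integrable ?M f" for f :: "_ \<Rightarrow> real"
      by (rule integrable_measure_pmf_finite[OF finite_set_rg])
    have "measure_pmf.expectation ?M (\<lambda>G. real (card (nbhd G n t i)))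
        \<le> measure_pmf.expectation ?M (\<lambda>G. real (card (Wit G n i t (\<lambda>m. m - 1))))"
    proof (intro integral_mono_AE int AE_pmfI)
      fix G assume "G \<in> set_pmf ?M"
      then have G: "G \<subseteq> Kn_edges n" using set_rg by auto
      show "real (card (nbhd G n t i)) \<le> real (card (Wit G n i t (\<lambda>m. m - 1)))"
        using card_nbhd_le[OF G t1] by (simp only: of_nat_le_iff)
    qed
    also have "\<dots> \<le> real n ^ t * q ^ t"
      by (rule exp_Wit[OF pp pq q0]) auto
    also have "\<dots> = c ^ t" by (simp add: nq flip: power_mult_distrib)
    finally have E1: "measure_pmf.expectation ?M (\<lambda>G. real (card (nbhd G n t i))) \<le> c ^ t" .
    have "measure_pmf.expectation ?M (\<lambda>G. (real (card (nbhd G n t i)))\<^sup>2)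
        \<le> measure_pmf.expectation ?M (\<lambda>G. (\<Sum>r\<in>{0..t}. real (card (Wit G n i (t + (t - r)) (parr t r)))))"
    proof (intro integral_mono_AE int AE_pmfI)
      fix G assume "G \<in> set_pmf ?M"
      then have G: "G \<subseteq> Kn_edges n" using set_rg by auto
      have "real ((card (nbhd G n t i))^2) \<le> real (\<Sum>r\<in>{0..t}. card (Wit G n i (t + (t - r)) (parr t r)))"
        using card_sq_le[OF G t1] by (simp only: of_nat_le_iff)
      then show "(real (card (nbhd G n t i)))\<^sup>2 \<le> (\<Sum>r\<in>{0..t}. real (card (Wit G n i (t + (t - r)) (parr t r))))"
        by simp
    qed
    also have "\<dots> = (\<Sum>r\<in>{0..t}. measure_pmf.expectation ?M (\<lambda>G. real (card (Wit G n i (t + (t - r)) (parr t r)))))"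
      by (rule Bochner_Integration.integral_sum) (rule int)
    also have "\<dots> \<le> (\<Sum>r\<in>{0..t}. c ^ (t + (t - r)))"
    proof (rule sum_mono)
      fix r assume r: "r \<in> {0..t}"
      have "measure_pmf.expectation ?M (\<lambda>G. real (card (Wit G n i (t + (t - r)) (parr t r))))
          \<le> real n ^ (t + (t - r)) * q ^ (t + (t - r))"
        by (rule exp_Wit[OF pp pq q0]) (use r parr_lt in auto)
      also have "\<dots> = c ^ (t + (t - r))" by (simp add: nq flip: power_mult_distrib)
      finally show "measure_pmf.expectation ?M (\<lambda>G. real (card (Wit G n i (t + (t - r)) (parr t r))))
          \<le> c ^ (t + (t - r))" .
    qed
    also have "\<dots> \<le> c ^ t / (1 - c)" by (rule geom_bound[OF c0 c1])
    finally show ?thesis using E1 unfolding c_def by simp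
  qed
  show ?thesis
    by (rule exI[of _ N]) (use cu main in \<open>auto simp: N_def\<close>)
qed

end
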